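(* Let $\mathbb O$ be a finite set of consecutive integers containing $0$, and let $\theta=0$. Let $x(0)\in\mathbb O^n$. If neither $\mathcal V_{<0}(x(0))=\{i: x_i(0)<0\}$ nor $\mathcal V_{>0}(x(0))=\{i: x_i(0)>0\}$ contains a non-empty strictly cohesive set, then there exists a finite legal update sequence from $x(0)$ along which the system reaches the consensus state $(0,\dots,0)$.
   Context: Let $n\ge1$, $\mathcal V=\{1,\dots,n\}$, and let $W=(w_{ij})$ be an $n\times n$ row-stochastic matrix (nonnegative entries, each row summing to $1$). For $x\in\mathbb O^n$, $i\in\mathcal V$, $z\in\mathbb O$, define $C^i_{\mathrm{social}}(z;x)=\sum_{j=1}^n w_{ij}|z-x_j|$ and $P_i(x)=\{z\in\mathbb O: C^i_{\mathrm{social}}(z;x)\le C^i_{\mathrm{social}}(x_i;x),\ |z-\theta|\le |x_i-\theta|\}$. A legal update sequence from $x(0)$ is a finite sequence $(i_1,z_1),\dots,(i_T,z_T)$ with $i_t\in\mathcal V$, generating $x(1),\dots,x(T)$ where $x(t)$ is obtained from $x(t-1)$ by setting coordinate $i_t$ to $z_t$, such that $z_t\in P_{i_t}(x(t-1))$ for every $t$. A set $\mathcal M\subseteq\mathcal V$ is strictly cohesive if $\sum_{j\in\mathcal M}w_{ij}>\tfrac12$ for every $i\in\mathcal M$. *)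

theory Defs
  imports Complex_Main
begin

text \<open>Agents are indexed by V = {1..n}; states are functions nat => int,
  only coordinates in {1..n} are meaningful. The opinion set O is a set of integers.\<close>

definition row_stochastic :: "nat \<Rightarrow> (nat \<Rightarrow> nat \<Rightarrow> real) \<Rightarrow> bool" where
  "row_stochastic n W \<longleftrightarrow>
     (\<forall>i\<in>{1..n}. (\<forall>j\<in>{1..n}. W i j \<ge> 0) \<and> (\<Sum>j=1..n. W i j) = 1)"

definition C_social :: "nat \<Rightarrow> (nat \<Rightarrow> nat \<Rightarrow> real) \<Rightarrow> nat \<Rightarrow> int \<Rightarrow> (nat \<Rightarrow> int) \<Rightarrow> real" where
  "C_social n W i z x = (\<Sum>j=1..n. W i j * \<bar>real_of_int (z - x j)\<bar>)"

definition P_set :: "int set \<Rightarrow> int \<Rightarrow> nat \<Rightarrow> (nat \<Rightarrow> nat \<Rightarrow> real) \<Rightarrow> nat \<Rightarrow> (nat \<Rightarrow> int) \<Rightarrow> int set" where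
  "P_set O\<^sub>s \<theta> n W i x =
     {z \<in> O\<^sub>s. C_social n W i z x \<le> C_social n W i (x i) x \<and> \<bar>z - \<theta>\<bar> \<le> \<bar>x i - \<theta>\<bar>}"

fun legal_seq :: "int set \<Rightarrow> int \<Rightarrow> nat \<Rightarrow> (nat \<Rightarrow> nat \<Rightarrow> real) \<Rightarrow> (nat \<Rightarrow> int) \<Rightarrow> (nat \<times> int) list \<Rightarrow> bool" where
  "legal_seq O\<^sub>s \<theta> n W x [] = True"
| "legal_seq O\<^sub>s \<theta> n W x ((i, z) # us) =
     (i \<in> {1..n} \<and> z \<in> P_set O\<^sub>s \<theta> n W i x \<and> legal_seq O\<^sub>s \<theta> n W (x(i := z)) us)"

fun run_seq :: "(nat \<Rightarrow> int) \<Rightarrow> (nat \<times> int) list \<Rightarrow> (nat \<Rightarrow> int)" where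
  "run_seq x [] = x"
| "run_seq x ((i, z) # us) = run_seq (x(i := z)) us"

definition strictly_cohesive :: "nat \<Rightarrow> (nat \<Rightarrow> nat \<Rightarrow> real) \<Rightarrow> nat set \<Rightarrow> bool" where
  "strictly_cohesive n W M \<longleftrightarrow> M \<subseteq> {1..n} \<and> (\<forall>i\<in>M. (\<Sum>j\<in>M. W i j) > 1/2)"

end

theory Submission
  imports Defs
begin

lemma cost_zero:
  assumes rs: "row_stochastic n W" and i: "i \<in> {1..n}"
    and half: "(\<Sum>j\<in>{j\<in>{1..n}. x j * x i > 0}. W i j) \<le> 1/2"
  shows "C_social n W i 0 x \<le> C_social n W i (x i) x"
proof -
  define A where "A = {j\<in>{1..n}. x j * x i > 0}"
  define c where "c = real_of_int \<bar>x i\<bar>"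
  have c0: "c \<ge> 0" unfolding c_def by simp
  have nn: "\<forall>j\<in>{1..n}. W i j \<ge> 0" and s1: "(\<Sum>j=1..n. W i j) = 1"
    using rs i unfolding row_stochastic_def by auto
  have trm: "W i j * \<bar>real_of_int (0 - x j)\<bar> \<le> W i j * \<bar>real_of_int (x i - x j)\<bar> + c * (W i j * (if j \<in> A then 1 else -1))"
    if j: "j\<in>{1..n}" for j
  proof (cases "j \<in> A")
    case True
    have "\<bar>real_of_int (0 - x j)\<bar> \<le> \<bar>real_of_int (x i - x j)\<bar> + c" unfolding c_def by linarith
    then have "W i j * \<bar>real_of_int (0 - x j)\<bar> \<le> W i j * (\<bar>real_of_int (x i - x j)\<bar> + c)"
      using nn j by (simp add: mult_left_mono)
    then show ?thesis using True by (simp add: algebra_simps)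
  next
    case False
    then have "x j * x i \<le> 0" using j unfolding A_def by auto
    then have "(x j \<le> 0 \<and> x i \<ge> 0) \<or> (x j \<ge> 0 \<and> x i \<le> 0)" by (auto simp: mult_le_0_iff)
    then have "\<bar>real_of_int (0 - x j)\<bar> = \<bar>real_of_int (x i - x j)\<bar> - c" unfolding c_def by linarith
    then have "W i j * \<bar>real_of_int (0 - x j)\<bar> = W i j * \<bar>real_of_int (x i - x j)\<bar> - c * W i j"
      by (metis (no_types, lifting) mult.commute right_diff_distrib)
    then show ?thesis using False by simp
  qed
  have "C_social n W i 0 x \<le> (\<Sum>j=1..n. W i j * \<bar>real_of_int (x i - x j)\<bar> + c * (W i j * (if j \<in> A then 1 else -1)))"
    unfolding C_social_def by (rule sum_mono) (use trm in auto)
  also have "\<dots> = C_social n W i (x i) x + c * (\<Sum>j=1..n. W i j * (if j \<in> A then 1 else -1))"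
    unfolding C_social_def by (simp add: sum.distrib sum_distrib_left)
  also have "(\<Sum>j=1..n. W i j * (if j \<in> A then 1 else -1)) = (\<Sum>j\<in>A. W i j) - (\<Sum>j\<in>{1..n} - A. W i j)"
  proof -
    have "(\<Sum>j=1..n. W i j * (if j \<in> A then 1 else -1)) = (\<Sum>j=1..n. (if j \<in> A then W i j else - W i j))"
      by (rule sum.cong) auto
    also have "\<dots> = (\<Sum>j\<in>{1..n} \<inter> A. W i j) + (\<Sum>j\<in>{1..n} \<inter> - A. - W i j)"
      by (simp add: sum.If_cases)
    also have "{1..n} \<inter> A = A" unfolding A_def by auto
    also have "{1..n} \<inter> - A = {1..n} - A" by auto
    finally show ?thesis by (simp add: sum_negf)
  qed
  also have "(\<Sum>j\<in>{1..n} - A. W i j) = 1 - (\<Sum>j\<in>A. W i j)"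
  proof -
    have "A \<subseteq> {1..n}" unfolding A_def by auto
    then have "(\<Sum>j\<in>{1..n} - A. W i j) + (\<Sum>j\<in>A. W i j) = 1"
      using s1 sum.subset_diff[of A "{1..n}" "W i"] by auto
    then show ?thesis by linarith
  qed
  finally have "C_social n W i 0 x \<le> C_social n W i (x i) x + c * (2 * (\<Sum>j\<in>A. W i j) - 1)"
    by (simp add: algebra_simps)
  moreover have "c * (2 * (\<Sum>j\<in>A. W i j) - 1) \<le> 0"
    using half c0 unfolding A_def by (simp add: mult_nonneg_nonpos)
  ultimately show ?thesis by linarith
qed

lemma main:
  assumes rs: "row_stochastic n W" and ab: "a \<le> 0" "0 \<le> b"
  shows "card {i\<in>{1..n}. x i \<noteq> 0} = k \<Longrightarrow> \<forall>j\<in>{1..n}. x j \<in> {a..b}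
    \<Longrightarrow> \<not> (\<exists>M. M \<noteq> {} \<and> M \<subseteq> {i \<in> {1..n}. x i < 0} \<and> strictly_cohesive n W M)
    \<Longrightarrow> \<not> (\<exists>M. M \<noteq> {} \<and> M \<subseteq> {i \<in> {1..n}. x i > 0} \<and> strictly_cohesive n W M)
    \<Longrightarrow> \<exists>us. legal_seq {a..b} 0 n W x us \<and> (\<forall>j\<in>{1..n}. run_seq x us j = 0)"
proof (induction k arbitrary: x rule: less_induct)
  case (less k x)
  show ?case
  proof (cases "\<forall>j\<in>{1..n}. x j = 0")
    case True
    have "legal_seq {a..b} 0 n W x [] \<and> (\<forall>j\<in>{1..n}. run_seq x [] j = 0)" using True by simp
    then show ?thesis by blast
  next
    case False
    then obtain i0 where i0: "i0 \<in> {1..n}" "x i0 \<noteq> 0" by auto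
    have "\<exists>i\<in>{1..n}. x i \<noteq> 0 \<and> (\<Sum>j\<in>{j\<in>{1..n}. x j * x i > 0}. W i j) \<le> 1/2"
    proof (cases "x i0 > 0")
      case True
      define P where "P = {i \<in> {1..n}. x i > 0}"
      have ne: "P \<noteq> {}" using i0 True unfolding P_def by auto
      have "\<not> strictly_cohesive n W P" using less.prems(4) ne unfolding P_def by (metis order_refl)
      then obtain i where i: "i \<in> P" "(\<Sum>j\<in>P. W i j) \<le> 1/2"
        unfolding strictly_cohesive_def P_def by auto
      have eq: "{j\<in>{1..n}. x j * x i > 0} = P" using i unfolding P_def by (auto simp: zero_less_mult_iff)
      have "i \<in> {1..n}" "x i \<noteq> 0" using i(1) unfolding P_def by auto
      then show ?thesis using i(2) eq by (intro bexI[of _ i]) auto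
    next
      case False
      then have neg: "x i0 < 0" using i0 by auto
      define P where "P = {i \<in> {1..n}. x i < 0}"
      have ne: "P \<noteq> {}" using i0 neg unfolding P_def by auto
      have "\<not> strictly_cohesive n W P" using less.prems(3) ne unfolding P_def by (metis order_refl)
      then obtain i where i: "i \<in> P" "(\<Sum>j\<in>P. W i j) \<le> 1/2"
        unfolding strictly_cohesive_def P_def by auto
      have eq: "{j\<in>{1..n}. x j * x i > 0} = P" using i unfolding P_def by (auto simp: zero_less_mult_iff)
      have "i \<in> {1..n}" "x i \<noteq> 0" using i(1) unfolding P_def by auto
      then show ?thesis using i(2) eq by (intro bexI[of _ i]) auto
    qed
    then obtain i where i: "i \<in> {1..n}" "x i \<noteq> 0"
      and h: "(\<Sum>j\<in>{j\<in>{1..n}. x j * x i > 0}. W i j) \<le> 1/2" by blast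
    define x' where "x' = x(i := 0)"
    have setq: "{j\<in>{1..n}. x' j \<noteq> 0} = {j\<in>{1..n}. x j \<noteq> 0} - {i}"
      unfolding x'_def by auto
    have c1: "card {j\<in>{1..n}. x' j \<noteq> 0} < k"
      unfolding setq less.prems(1)[symmetric]
      by (rule card_Diff1_less) (use i in auto)
    have c2: "\<forall>j\<in>{1..n}. x' j \<in> {a..b}" using less.prems(2) ab unfolding x'_def by auto
    have s3: "{j \<in> {1..n}. x' j < 0} \<subseteq> {j \<in> {1..n}. x j < 0}" unfolding x'_def by auto
    have c3: "\<not> (\<exists>M. M \<noteq> {} \<and> M \<subseteq> {i \<in> {1..n}. x' i < 0} \<and> strictly_cohesive n W M)"
      using less.prems(3) s3 by (meson order_trans)
    have s4: "{j \<in> {1..n}. x' j > 0} \<subseteq> {j \<in> {1..n}. x j > 0}" unfolding x'_def by auto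
    have c4: "\<not> (\<exists>M. M \<noteq> {} \<and> M \<subseteq> {i \<in> {1..n}. x' i > 0} \<and> strictly_cohesive n W M)"
      using less.prems(4) s4 by (meson order_trans)
    obtain us where us: "legal_seq {a..b} 0 n W x' us" "\<forall>j\<in>{1..n}. run_seq x' us j = 0"
      using less.IH[OF c1 refl c2 c3 c4] by blast
    have "0 \<in> P_set {a..b} 0 n W i x"
      unfolding P_set_def using ab cost_zero[OF rs i(1) h] by auto
    then have "legal_seq {a..b} 0 n W x ((i, 0) # us) \<and> (\<forall>j\<in>{1..n}. run_seq x ((i, 0) # us) j = 0)"
      using us i unfolding x'_def by simp
    then show ?thesis by blast
  qed
qed

theorem theorem5:
  fixes n :: nat and W :: "nat \<Rightarrow> nat \<Rightarrow> real" and a b :: int and x0 :: "nat \<Rightarrow> int"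
  assumes "n \<ge> 1"
    and "row_stochastic n W"
    and "a \<le> 0" and "0 \<le> b"
    and "\<forall>j\<in>{1..n}. x0 j \<in> {a..b}"
    and "\<not> (\<exists>M. M \<noteq> {} \<and> M \<subseteq> {i \<in> {1..n}. x0 i < 0} \<and> strictly_cohesive n W M)"
    and "\<not> (\<exists>M. M \<noteq> {} \<and> M \<subseteq> {i \<in> {1..n}. x0 i > 0} \<and> strictly_cohesive n W M)"
  shows "\<exists>us. legal_seq {a..b} 0 n W x0 us \<and> (\<forall>j\<in>{1..n}. run_seq x0 us j = 0)"
  using main[OF assms(2,3,4) refl assms(5,6,7)] .

end
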